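(* Let $E$ be a directed graph and let the graph inverse semigroup $G(E)$ carry a Hausdorff topology $\tau$ making it a semitopological semigroup. The following are equivalent: (1) $(G(E),\tau)$ is compact; (2) it is countably compact; (3) it is feebly compact; (4) it is CLP-compact; (5) $(G(E),\tau)$ is topologically isomorphic to $(G(E),\tau_c)$.
   Context: All spaces are Hausdorff. A semitopological semigroup is a topological space with a separately continuous associative multiplication. A space is countably compact if every infinite subset has an accumulation point; feebly compact if every locally finite family of non-empty open sets is finite; CLP-compact if every cover by clopen sets has a finite subcover. A directed graph $E=(E^0,E^1,r,s)$ has vertices $E^0$, edges $E^1$, source/range maps $s,r:E^1\to E^0$; paths are vertices and sequences of edges $e_1\ldots e_n$ with $r(e_i)=s(e_{i+1})$. The graph inverse semigroup $G(E)$ is the semigroup with zero $0$ generated by $E^0$, $E^1$, $E^{-1}=\{e^{-1}\mid e\in E^1\}$ subject to: for $a,b\in E^0$, $e,f\in E^1$: $ab=a$ if $a=b$, else $0$; $s(e)e=er(e)=e$; $e^{-1}s(e)=r(e)e^{-1}=e^{-1}$; $e^{-1}f=r(e)$ if $e=f$, else $0$. The topology $\tau_c$ on $G(E)$: non-zero elements are isolated and the open neighborhoods of $0$ are the cofinite subsets containing $0$. *)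

theory Defs
  imports "HOL-Analysis.Analysis" "HOL-Library.Sublist"
begin

text \<open>A path is represented as a pair (a, es):
  es = [] encodes the vertex a (a path of length 0), otherwise es = e1...en is a
  sequence of edges with r(e_i) = s(e_(i+1)) and a = s(e1).\<close>

definition graph :: "'v set \<Rightarrow> 'e set \<Rightarrow> ('e \<Rightarrow> 'v) \<Rightarrow> ('e \<Rightarrow> 'v) \<Rightarrow> bool" where
  "graph V Ed s r \<longleftrightarrow> s ` Ed \<subseteq> V \<and> r ` Ed \<subseteq> V"

definition is_path :: "'v set \<Rightarrow> 'e set \<Rightarrow> ('e \<Rightarrow> 'v) \<Rightarrow> ('e \<Rightarrow> 'v) \<Rightarrow> 'v \<times> 'e list \<Rightarrow> bool" where
  "is_path V Ed s r p \<longleftrightarrow>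
     fst p \<in> V \<and> set (snd p) \<subseteq> Ed \<and>
     (snd p \<noteq> [] \<longrightarrow> s (hd (snd p)) = fst p) \<and>
     (\<forall>i. Suc i < length (snd p) \<longrightarrow> r (snd p ! i) = s (snd p ! Suc i))"

definition path_src :: "'v \<times> 'e list \<Rightarrow> 'v" where
  "path_src p = fst p"

definition path_rng :: "('e \<Rightarrow> 'v) \<Rightarrow> 'v \<times> 'e list \<Rightarrow> 'v" where
  "path_rng r p = (if snd p = [] then fst p else r (last (snd p)))"

definition path_prefix :: "'v \<times> 'e list \<Rightarrow> 'v \<times> 'e list \<Rightarrow> bool" where
  "path_prefix p q \<longleftrightarrow> fst p = fst q \<and> prefix (snd p) (snd q)"

definition path_rest :: "('e \<Rightarrow> 'v) \<Rightarrow> 'v \<times> 'e list \<Rightarrow> 'v \<times> 'e list \<Rightarrow> 'v \<times> 'e list" where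
  "path_rest r p q = (path_rng r p, drop (length (snd p)) (snd q))"

definition path_cat :: "'v \<times> 'e list \<Rightarrow> 'v \<times> 'e list \<Rightarrow> 'v \<times> 'e list" where
  "path_cat p q = (fst p, snd p @ snd q)"

text \<open>Elements of G(E): zero, and the elements u v^{-1} (GElt u v) with u, v paths,
  r(u) = r(v). This is the standard normal form of the graph inverse semigroup.\<close>

datatype ('v, 'e) gis = GZero | GElt "'v \<times> 'e list" "'v \<times> 'e list"

definition gis_carrier :: "'v set \<Rightarrow> 'e set \<Rightarrow> ('e \<Rightarrow> 'v) \<Rightarrow> ('e \<Rightarrow> 'v) \<Rightarrow> ('v, 'e) gis set" where
  "gis_carrier V Ed s r = insert GZero
     {GElt u v | u v. is_path V Ed s r u \<and> is_path V Ed s r v \<and> path_rng r u = path_rng r v}"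

text \<open>(u v^{-1})(w z^{-1}) = u w' z^{-1} if w = v w';  u (z v')^{-1} if v = w v';  0 otherwise.\<close>
fun gis_mult :: "('e \<Rightarrow> 'v) \<Rightarrow> ('v, 'e) gis \<Rightarrow> ('v, 'e) gis \<Rightarrow> ('v, 'e) gis" where
  "gis_mult r (GElt u v) (GElt w z) =
     (if path_prefix v w then GElt (path_cat u (path_rest r v w)) z
      else if path_prefix w v then GElt u (path_cat z (path_rest r w v))
      else GZero)"
| "gis_mult r _ _ = GZero"

text \<open>generators: vertex a = a a^{-1}, edge e = e r(e)^{-1}, e^{-1} = r(e) e^{-1}\<close>
definition gis_vertex :: "'v \<Rightarrow> ('v, 'e) gis" where
  "gis_vertex a = GElt (a, []) (a, [])"
definition gis_edge :: "('e \<Rightarrow> 'v) \<Rightarrow> ('e \<Rightarrow> 'v) \<Rightarrow> 'e \<Rightarrow> ('v, 'e) gis" where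
  "gis_edge s r e = GElt (s e, [e]) (r e, [])"
definition gis_edge_inv :: "('e \<Rightarrow> 'v) \<Rightarrow> ('e \<Rightarrow> 'v) \<Rightarrow> 'e \<Rightarrow> ('v, 'e) gis" where
  "gis_edge_inv s r e = GElt (r e, []) (s e, [e])"

definition semitopological :: "'a topology \<Rightarrow> ('a \<Rightarrow> 'a \<Rightarrow> 'a) \<Rightarrow> bool" where
  "semitopological T m \<longleftrightarrow>
     (\<forall>a\<in>topspace T. continuous_map T T (\<lambda>x. m a x) \<and> continuous_map T T (\<lambda>x. m x a))"

definition countably_compact_space :: "'a topology \<Rightarrow> bool" where
  "countably_compact_space T \<longleftrightarrow>
     (\<forall>A. A \<subseteq> topspace T \<and> infinite A \<longrightarrow> (\<exists>x\<in>topspace T. x \<in> T derived_set_of A))"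

definition feebly_compact_space :: "'a topology \<Rightarrow> bool" where
  "feebly_compact_space T \<longleftrightarrow>
     (\<forall>\<F>. (\<forall>U\<in>\<F>. openin T U \<and> U \<noteq> {}) \<and> locally_finite_in T \<F> \<longrightarrow> finite \<F>)"

definition clp_compact_space :: "'a topology \<Rightarrow> bool" where
  "clp_compact_space T \<longleftrightarrow>
     (\<forall>\<C>. (\<forall>U\<in>\<C>. openin T U \<and> closedin T U) \<and> topspace T \<subseteq> \<Union>\<C> \<longrightarrow>
        (\<exists>\<F>\<subseteq>\<C>. finite \<F> \<and> topspace T \<subseteq> \<Union>\<F>))"

definition tau_c :: "'v set \<Rightarrow> 'e set \<Rightarrow> ('e \<Rightarrow> 'v) \<Rightarrow> ('e \<Rightarrow> 'v) \<Rightarrow> ('v, 'e) gis topology" where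
  "tau_c V Ed s r = topology (\<lambda>U. U \<subseteq> gis_carrier V Ed s r \<and>
      (GZero \<in> U \<longrightarrow> finite (gis_carrier V Ed s r - U)))"

definition top_iso_semigroups ::
  "'a topology \<Rightarrow> ('a \<Rightarrow> 'a \<Rightarrow> 'a) \<Rightarrow> 'b topology \<Rightarrow> ('b \<Rightarrow> 'b \<Rightarrow> 'b) \<Rightarrow> bool" where
  "top_iso_semigroups T m T' m' \<longleftrightarrow>
     (\<exists>h. homeomorphic_map T T' h \<and>
          (\<forall>x\<in>topspace T. \<forall>y\<in>topspace T. h (m x y) = m' (h x) (h y)))"

lemma tau_c_Int:
  assumes a: "S \<subseteq> gis_carrier V Ed s r \<and> (GZero \<in> S \<longrightarrow> finite (gis_carrier V Ed s r - S))"
     and b: "T \<subseteq> gis_carrier V Ed s r \<and> (GZero \<in> T \<longrightarrow> finite (gis_carrier V Ed s r - T))"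
  shows "S \<inter> T \<subseteq> gis_carrier V Ed s r \<and> (GZero \<in> S \<inter> T \<longrightarrow> finite (gis_carrier V Ed s r - S \<inter> T))"
proof -
  have eq: "gis_carrier V Ed s r - (S \<inter> T) = (gis_carrier V Ed s r - S) \<union> (gis_carrier V Ed s r - T)" by blast
  show ?thesis
  proof
    show "S \<inter> T \<subseteq> gis_carrier V Ed s r" using a by blast
    show "GZero \<in> S \<inter> T \<longrightarrow> finite (gis_carrier V Ed s r - S \<inter> T)"
    proof
      assume z: "GZero \<in> S \<inter> T"
      then have "finite (gis_carrier V Ed s r - S)" "finite (gis_carrier V Ed s r - T)" using a b by blast+
      then show "finite (gis_carrier V Ed s r - S \<inter> T)" using eq by (simp only: finite_Un)
    qed
  qed
qed

lemma tau_c_Union: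
  assumes K: "\<forall>S\<in>K. S \<subseteq> gis_carrier V Ed s r \<and> (GZero \<in> S \<longrightarrow> finite (gis_carrier V Ed s r - S))"
  shows "\<Union>K \<subseteq> gis_carrier V Ed s r \<and> (GZero \<in> \<Union>K \<longrightarrow> finite (gis_carrier V Ed s r - \<Union>K))"
proof
  show "\<Union>K \<subseteq> gis_carrier V Ed s r" using K by blast
  show "GZero \<in> \<Union>K \<longrightarrow> finite (gis_carrier V Ed s r - \<Union>K)"
  proof
    assume "GZero \<in> \<Union>K"
    then obtain S where "S \<in> K" "GZero \<in> S" by blast
    then have "finite (gis_carrier V Ed s r - S)" using K by blast
    moreover have "gis_carrier V Ed s r - \<Union>K \<subseteq> gis_carrier V Ed s r - S" using \<open>S \<in> K\<close> by blast
    ultimately show "finite (gis_carrier V Ed s r - \<Union>K)" by (rule finite_subset[rotated])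
  qed
qed

lemma istopology_tau_c:
  "istopology (\<lambda>U. U \<subseteq> gis_carrier V Ed s r \<and> (GZero \<in> U \<longrightarrow> finite (gis_carrier V Ed s r - U)))"
  unfolding istopology_def
  apply (rule conjI)
   apply (intro allI impI)
   apply (erule (1) tau_c_Int)
  apply (intro allI impI)
  apply (erule tau_c_Union)
  done

lemma openin_tau_c:
  "openin (tau_c V Ed s r) U \<longleftrightarrow>
     U \<subseteq> gis_carrier V Ed s r \<and> (GZero \<in> U \<longrightarrow> finite (gis_carrier V Ed s r - U))"
  by (simp only: tau_c_def topology_inverse'[OF istopology_tau_c])

end

theory Submission
  imports Defs
begin


definition cof :: "'a topology \<Rightarrow> 'a \<Rightarrow> bool" where
  "cof X z \<longleftrightarrow> (\<forall>U. openin X U \<and> z \<in> U \<longrightarrow> finite (topspace X - U))"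

lemma cof_compact:
  assumes "z \<in> topspace X" "cof X z" shows "compact_space X"
  unfolding compact_space_def compactin_def
proof (intro conjI allI impI)
  fix \<U> assume A: "(\<forall>B\<in>\<U>. openin X B) \<and> topspace X \<subseteq> \<Union>\<U>"
  then obtain U0 where U0: "U0 \<in> \<U>" "z \<in> U0" using assms(1) by blast
  hence fin: "finite (topspace X - U0)" using A assms(2) unfolding cof_def by blast
  have "\<forall>x\<in>topspace X - U0. \<exists>U\<in>\<U>. x \<in> U" using A by blast
  then obtain g where g: "\<forall>x\<in>topspace X - U0. g x \<in> \<U> \<and> x \<in> g x" by metis
  show "\<exists>\<F>. finite \<F> \<and> \<F> \<subseteq> \<U> \<and> topspace X \<subseteq> \<Union>\<F>"
    by (rule exI[of _ "insert U0 (g ` (topspace X - U0))"]) (use fin g U0 in auto)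
qed auto

context
  fixes X :: "'a topology" and z :: 'a
  assumes z: "z \<in> topspace X" and t1: "t1_space X"
    and iso: "\<forall>x\<in>topspace X. x \<noteq> z \<longrightarrow> openin X {x}"
begin

lemma open_nz: "S \<subseteq> topspace X \<Longrightarrow> z \<notin> S \<Longrightarrow> openin X S"
proof (subst openin_subopen, intro ballI)
  fix x assume "S \<subseteq> topspace X" "z \<notin> S" "x \<in> S"
  hence "x \<in> topspace X" "x \<noteq> z" by auto
  hence "openin X {x}" using iso by simp
  thus "\<exists>T. openin X T \<and> x \<in> T \<and> T \<subseteq> S" using \<open>x \<in> S\<close> by blast
qed

lemma compact_cof: "compact_space X \<Longrightarrow> cof X z"
  unfolding cof_def
proof (intro allI impI)
  fix U assume c: "compact_space X" and U: "openin X U \<and> z \<in> U"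
  have "closedin X (topspace X - U)" using U by blast
  hence "compactin X (topspace X - U)" using c closedin_compact_space by blast
  moreover have "\<forall>B\<in>(\<lambda>x. {x}) ` (topspace X - U). openin X B" using iso U by auto
  moreover have "topspace X - U \<subseteq> \<Union>((\<lambda>x. {x}) ` (topspace X - U))" by auto
  ultimately obtain F where F: "finite F" "F \<subseteq> (\<lambda>x. {x}) ` (topspace X - U)" "topspace X - U \<subseteq> \<Union>F"
    unfolding compactin_def by meson
  have "finite (\<Union>F)" using F(1,2) by auto
  thus "finite (topspace X - U)" using F(3) finite_subset by blast
qed

lemma cof_cc: "cof X z \<Longrightarrow> countably_compact_space X"
  unfolding countably_compact_space_def
proof (intro allI impI)
  fix A assume c: "cof X z" and A: "A \<subseteq> topspace X \<and> infinite A"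
  have "z \<in> X derived_set_of A"
    unfolding derived_set_of_def
  proof (safe intro!: z)
    fix U assume "z \<in> U" "openin X U"
    hence "finite (topspace X - U)" using c unfolding cof_def by blast
    hence "infinite (A \<inter> U)" using A
      by (metis Diff_Int_distrib Int_Diff Int_absorb1 finite_Diff2 finite_Int inf_commute)
    hence "infinite (A \<inter> U - {z})" by simp
    then obtain y where "y \<in> A \<inter> U - {z}" by (metis finite.emptyI ex_in_conv)
    thus "\<exists>y. y \<noteq> z \<and> y \<in> A \<and> y \<in> U" by blast
  qed
  thus "\<exists>x\<in>topspace X. x \<in> X derived_set_of A" using z by blast
qed

lemma cc_cof: "countably_compact_space X \<Longrightarrow> cof X z"
  unfolding cof_def
proof (intro allI impI, rule ccontr)
  fix U assume c: "countably_compact_space X" and U: "openin X U \<and> z \<in> U"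
    and inf: "infinite (topspace X - U)"
  then obtain x where x: "x \<in> topspace X" "x \<in> X derived_set_of (topspace X - U)"
    unfolding countably_compact_space_def by blast
  show False
  proof (cases "x = z")
    case True thus ?thesis using x U unfolding derived_set_of_def by blast
  next
    case False
    hence "openin X {x}" using iso x by blast
    thus ?thesis using x unfolding derived_set_of_def by blast
  qed
qed

lemma cof_feebly: "cof X z \<Longrightarrow> feebly_compact_space X"
  unfolding feebly_compact_space_def
proof (intro allI impI)
  fix \<F> assume c: "cof X z" and F: "(\<forall>U\<in>\<F>. openin X U \<and> U \<noteq> {}) \<and> locally_finite_in X \<F>"
  then obtain V where V: "openin X V" "z \<in> V" "finite {U \<in> \<F>. U \<inter> V \<noteq> {}}"
    unfolding locally_finite_in_def using z by blast
  have "finite (topspace X - V)" using c V unfolding cof_def by blast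
  moreover have "\<F> \<subseteq> {U \<in> \<F>. U \<inter> V \<noteq> {}} \<union> Pow (topspace X - V)"
    using F by (auto dest: openin_subset)
  ultimately show "finite \<F>" using V(3) by (meson finite_Pow_iff finite_UnI finite_subset)
qed

lemma feebly_cof: "feebly_compact_space X \<Longrightarrow> cof X z"
  unfolding cof_def
proof (intro allI impI, rule ccontr)
  fix U assume c: "feebly_compact_space X" and U: "openin X U \<and> z \<in> U"
    and inf: "infinite (topspace X - U)"
  define \<F> where "\<F> = (\<lambda>x. {x}) ` (topspace X - U)"
  have "\<forall>W\<in>\<F>. openin X W \<and> W \<noteq> {}" unfolding \<F>_def using iso U by auto
  moreover have "locally_finite_in X \<F>"
    unfolding locally_finite_in_def
  proof (intro conjI ballI)
    show "\<Union> \<F> \<subseteq> topspace X" unfolding \<F>_def by auto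
    fix x assume x: "x \<in> topspace X"
    show "\<exists>V. openin X V \<and> x \<in> V \<and> finite {W \<in> \<F>. W \<inter> V \<noteq> {}}"
    proof (cases "x = z")
      case True
      have "{W \<in> \<F>. W \<inter> U \<noteq> {}} = {}" unfolding \<F>_def by auto
      thus ?thesis using U True by (metis finite.emptyI)
    next
      case False
      have "{W \<in> \<F>. W \<inter> {x} \<noteq> {}} \<subseteq> {{x}}" unfolding \<F>_def by auto
      thus ?thesis using iso x False by (metis finite.emptyI finite_insert finite_subset singletonI)
    qed
  qed
  ultimately have "finite \<F>" using c unfolding feebly_compact_space_def by blast
  moreover have "inj_on (\<lambda>x. {x}) (topspace X - U)" by (simp add: inj_on_def)
  ultimately have "finite (topspace X - U)" unfolding \<F>_def by (rule finite_imageD)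
  thus False using inf by simp
qed

lemma cof_clp: "cof X z \<Longrightarrow> clp_compact_space X"
proof -
  assume "cof X z"
  hence "compact_space X" using cof_compact[OF z] by blast
  hence K: "\<And>\<U>. (\<forall>B\<in>\<U>. openin X B) \<and> topspace X \<subseteq> \<Union>\<U> \<Longrightarrow> \<exists>\<F>. finite \<F> \<and> \<F> \<subseteq> \<U> \<and> topspace X \<subseteq> \<Union>\<F>"
    unfolding compact_space_def compactin_def by blast
  show ?thesis unfolding clp_compact_space_def
  proof (intro allI impI)
    fix \<C> assume "(\<forall>U\<in>\<C>. openin X U \<and> closedin X U) \<and> topspace X \<subseteq> \<Union>\<C>"
    hence "(\<forall>B\<in>\<C>. openin X B) \<and> topspace X \<subseteq> \<Union>\<C>" by blast
    from K[OF this] show "\<exists>\<F>\<subseteq>\<C>. finite \<F> \<and> topspace X \<subseteq> \<Union>\<F>" by blast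
  qed
qed

lemma clp_cof: "clp_compact_space X \<Longrightarrow> cof X z"
  unfolding cof_def
proof (intro allI impI, rule ccontr)
  fix U assume c: "clp_compact_space X" and U: "openin X U \<and> z \<in> U"
    and inf: "infinite (topspace X - U)"
  define \<C> where "\<C> = insert U ((\<lambda>x. {x}) ` (topspace X - U))"
  have o: "openin X (topspace X - U)" using open_nz U by blast
  have Us: "U \<subseteq> topspace X" using U openin_subset by blast
  have cU: "closedin X U" unfolding closedin_def using o Us by simp
  have cl: "closedin X {x}" if "x \<in> topspace X" for x
    using t1[unfolded t1_space_closedin_singleton] that by blast
  have op: "openin X {x}" if "x \<in> topspace X - U" for x
  proof -
    have "x \<noteq> z" using that U by blast
    thus ?thesis using iso that by simp
  qed
  have "\<forall>W\<in>\<C>. openin X W \<and> closedin X W"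
  proof
    fix W assume "W \<in> \<C>"
    hence "W = U \<or> (\<exists>x\<in>topspace X - U. W = {x})" unfolding \<C>_def by blast
    thus "openin X W \<and> closedin X W" using U cU cl op by blast
  qed
  moreover have "topspace X \<subseteq> \<Union>\<C>" unfolding \<C>_def by auto
  ultimately have "\<exists>F\<subseteq>\<C>. finite F \<and> topspace X \<subseteq> \<Union>F"
    using c unfolding clp_compact_space_def by blast
  then obtain F where F: "F \<subseteq> \<C>" "finite F" "topspace X \<subseteq> \<Union>F" by blast
  have "topspace X - U \<subseteq> \<Union>(F - {U})" using F(3) by blast
  moreover have "F - {U} \<subseteq> (\<lambda>x. {x}) ` (topspace X - U)" using F(1) unfolding \<C>_def by blast
  hence "\<forall>W\<in>F - {U}. finite W" by blast
  hence "finite (\<Union>(F - {U}))" using F(2) by blast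
  ultimately show False using inf finite_subset by blast
qed

end


lemma vert_f:
  assumes "y \<in> gis_carrier V Ed s r" "f \<in> Ed"
   "gis_mult r (GElt (r f, []) (s f, [f])) y \<noteq> GZero"
   "gis_mult r (GElt (s f, [f]) (s f, [f])) y \<noteq> y"
   "gis_mult r y (GElt (s f, [f]) (r f, [])) \<noteq> GZero"
   "gis_mult r y (GElt (s f, [f]) (s f, [f])) \<noteq> y"
  shows "y = GElt (s f, []) (s f, [])"
proof -
  obtain p q where y: "y = GElt p q" using assms(1,3) by (cases y) auto
  obtain a ps where p: "p = (a, ps)" by fastforce
  obtain b qs where q: "q = (b, qs)" by fastforce
  show ?thesis using assms(3-6) unfolding y p q
    by (cases ps; cases qs) (auto simp: path_prefix_def path_cat_def path_rest_def split: if_splits)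
qed



lemma vert_nof:
  assumes "y \<in> gis_carrier V Ed s r" "\<forall>f\<in>Ed. s f \<noteq> w"
   "gis_mult r (GElt (w, []) (w, [])) y \<noteq> GZero"
   "gis_mult r y (GElt (w, []) (w, [])) \<noteq> GZero"
  shows "y = GElt (w, []) (w, [])"
proof -
  obtain p q where y: "y = GElt p q" "is_path V Ed s r p" "is_path V Ed s r q" using assms(1,3) 
    unfolding gis_carrier_def by auto
  obtain a ps where p: "p = (a, ps)" by fastforce
  obtain b qs where q: "q = (b, qs)" by fastforce
  show ?thesis using assms(2-4) y(2,3) unfolding y p q
    by (cases ps; cases qs) (auto simp: is_path_def path_prefix_def path_cat_def path_rest_def split: if_splits)
qed

lemma pre_fin:
  assumes "gis_mult r (gis_mult r (GElt (path_rng r u, []) u) (GElt p q)) (GElt v (path_rng r v, [])) = GElt (w, []) (w, [])"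
  shows "path_prefix p u \<and> path_prefix q v"
  using assms
  by (auto simp: path_prefix_def path_cat_def path_rest_def prefix_def split: if_splits; metis)

lemma a_val:
  assumes "path_rng r u = path_rng r v"
  shows "gis_mult r (gis_mult r (GElt (path_rng r u, []) u) (GElt u v)) (GElt v (path_rng r v, [])) = GElt (path_rng r u, []) (path_rng r u, [])"
  using assms
  by (auto simp: path_prefix_def path_cat_def path_rest_def)



lemma nonzero_isolated:
  fixes T :: "('v, 'e) gis topology"
  assumes G: "graph V Ed s r" and top: "topspace T = gis_carrier V Ed s r"
    and H: "Hausdorff_space T" and st: "semitopological T (gis_mult r)"
  shows "\<forall>x\<in>topspace T. x \<noteq> GZero \<longrightarrow> openin T {x}"
proof -
  have t1: "t1_space T" using H Hausdorff_imp_t1_space by blast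
  have L: "continuous_map T T (gis_mult r a)" if "a \<in> topspace T" for a
    using st that unfolding semitopological_def by blast
  have R: "continuous_map T T (\<lambda>x. gis_mult r x a)" if "a \<in> topspace T" for a
    using st that unfolding semitopological_def by blast
  have opne: "openin T {y \<in> topspace T. g y \<noteq> c}" if "c \<in> topspace T" "continuous_map T T g" for g c
  proof -
    have "closedin T {c}" using t1[unfolded t1_space_closedin_singleton] that(1) by blast
    hence "closedin T {y \<in> topspace T. g y \<in> {c}}" using that(2) closedin_continuous_map_preimage by blast
    hence "openin T (topspace T - {y \<in> topspace T. g y \<in> {c}})" by (simp add: closedin_def)
    moreover have "topspace T - {y \<in> topspace T. g y \<in> {c}} = {y \<in> topspace T. g y \<noteq> c}" by auto
    ultimately show ?thesis by simp
  qed
  have opneq: "openin T {y \<in> topspace T. g y \<noteq> y}" if "continuous_map T T g" for g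
  proof -
    have "closedin T {y \<in> topspace T. g y = id y}"
      using closedin_continuous_maps_eq[OF H that continuous_map_id] by simp
    hence "openin T (topspace T - {y \<in> topspace T. g y = id y})" by (simp add: closedin_def)
    moreover have "topspace T - {y \<in> topspace T. g y = id y} = {y \<in> topspace T. g y \<noteq> y}" by auto
    ultimately show ?thesis by simp
  qed
  have sV: "s f \<in> V" "r f \<in> V" if "f \<in> Ed" for f using G that unfolding graph_def by auto
  have vert: "openin T {GElt (w,[]) (w,[])}" if w: "w \<in> V" for w
  proof -
    define wv :: "('v, 'e) gis" where "wv = GElt (w,[]) (w,[])"
    have wvT: "wv \<in> topspace T" unfolding top wv_def gis_carrier_def using w
      by (auto simp: is_path_def path_rng_def)
    show ?thesis
    proof (cases "\<exists>f\<in>Ed. s f = w")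
      case True
      then obtain f where f: "f \<in> Ed" "s f = w" by blast
      define fi where "fi = GElt (r f, []) (s f, [f])"
      define ff where "ff = GElt (s f, [f]) (s f, [f])"
      define fe where "fe = GElt (s f, [f]) (r f, [])"
      have inT: "fi \<in> topspace T" "ff \<in> topspace T" "fe \<in> topspace T"
        unfolding top fi_def ff_def fe_def gis_carrier_def using sV[OF f(1)] f(1)
        by (auto simp: is_path_def path_rng_def)
      define N where "N = {y \<in> topspace T. gis_mult r fi y \<noteq> GZero} \<inter> {y \<in> topspace T. gis_mult r ff y \<noteq> y}
         \<inter> {y \<in> topspace T. gis_mult r y fe \<noteq> GZero} \<inter> {y \<in> topspace T. gis_mult r y ff \<noteq> y}"
      have zT: "GZero \<in> topspace T" unfolding top gis_carrier_def by simp
      have "openin T N" unfolding N_def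
        by (intro openin_Int opne opneq zT L R inT)
      moreover have "N = {wv}"
      proof
        show "N \<subseteq> {wv}"
          using vert_f[of _ V Ed s r f] f unfolding N_def top fi_def ff_def fe_def wv_def by blast
        show "{wv} \<subseteq> N" using wvT f unfolding N_def fi_def ff_def fe_def wv_def
          by (auto simp: path_prefix_def path_cat_def path_rest_def path_rng_def)
      qed
      ultimately show ?thesis unfolding wv_def by simp
    next
      case False
      define N where "N = {y \<in> topspace T. gis_mult r wv y \<noteq> GZero} \<inter> {y \<in> topspace T. gis_mult r y wv \<noteq> GZero}"
      have zT: "GZero \<in> topspace T" unfolding top gis_carrier_def by simp
      have "openin T N" unfolding N_def
        by (intro openin_Int opne zT L R wvT)
      moreover have "N = {wv}"
      proof
        show "N \<subseteq> {wv}"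
          using vert_nof[of _ V Ed s r w] False unfolding N_def top wv_def by blast
        show "{wv} \<subseteq> N" using wvT unfolding N_def wv_def
          by (auto simp: path_prefix_def path_cat_def path_rest_def path_rng_def)
      qed
      ultimately show ?thesis unfolding wv_def by simp
    qed
  qed
  show ?thesis
  proof (intro ballI impI)
    fix x assume xT: "x \<in> topspace T" and nz: "x \<noteq> GZero"
    then obtain u v where x: "x = GElt u v" and pu: "is_path V Ed s r u" and pv: "is_path V Ed s r v"
      and rr: "path_rng r u = path_rng r v"
      unfolding top gis_carrier_def by auto
    have rV: "path_rng r p \<in> V" if "is_path V Ed s r p" for p
    proof (cases "snd p = []")
      case True thus ?thesis using that by (simp add: is_path_def path_rng_def)
    next
      case False
      hence "last (snd p) \<in> Ed" using that unfolding is_path_def by auto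
      thus ?thesis using False sV by (simp add: path_rng_def)
    qed
    define w where "w = path_rng r u"
    define ui where "ui = GElt (path_rng r u, []) u"
    define ve where "ve = GElt v (path_rng r v, [])"
    have triv: "is_path V Ed s r (path_rng r p, [])" "path_rng r (path_rng r p, []) = path_rng r p"
      if "is_path V Ed s r p" for p
      using rV[OF that] by (auto simp: is_path_def path_rng_def)
    have uiT: "ui \<in> topspace T" unfolding top ui_def gis_carrier_def using triv[OF pu] pu
      by blast
    have veT: "ve \<in> topspace T" unfolding top ve_def gis_carrier_def using triv[OF pv] pv
      by (metis (mono_tags, lifting) insertCI mem_Collect_eq)
    define g where "g = (\<lambda>y. gis_mult r (gis_mult r ui y) ve)"
    have gc: "continuous_map T T g" unfolding g_def
      using continuous_map_compose[OF L[OF uiT] R[OF veT]] by (simp add: o_def)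
    define P where "P = {y \<in> topspace T. g y \<in> {GElt (w,[]) (w,[])}}"
    have Po: "openin T P" unfolding P_def
      using openin_continuous_map_preimage[OF gc vert[OF rV[OF pu]]] w_def by simp
    have xP: "x \<in> P" unfolding P_def g_def ui_def ve_def w_def x using xT a_val[OF rr] x by simp
    define S where "S = (\<lambda>(p,q). GElt p q) ` (({fst u} \<times> set (prefixes (snd u))) \<times> ({fst v} \<times> set (prefixes (snd v))))"
    have "finite S" unfolding S_def by simp
    moreover have "P \<subseteq> S"
    proof
      fix y assume yP: "y \<in> P"
      show "y \<in> S"
      proof (cases y)
        case GZero thus ?thesis using yP unfolding P_def g_def ui_def by simp
      next
        case (GElt p q)
        hence "path_prefix p u \<and> path_prefix q v"
          using yP pre_fin[of r u p q v w] unfolding P_def g_def ui_def ve_def by simp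
        thus ?thesis unfolding S_def GElt path_prefix_def
          by (auto intro!: image_eqI[of _ _ "(p,q)"] simp: mem_Times_iff)
      qed
    qed
    ultimately have "finite (P - {x})" by (meson finite_Diff finite_subset)
    moreover have "P - {x} \<subseteq> topspace T" unfolding P_def by auto
    ultimately have "closedin T (P - {x})" using t1[unfolded t1_space_closedin_finite] by blast
    with Po have "openin T (P - (P - {x}))" by (rule openin_diff)
    moreover have "P - (P - {x}) = {x}" using xP by blast
    ultimately show "openin T {x}" by simp
  qed
qed


lemma topspace_tau_c: "topspace (tau_c V Ed s r) = gis_carrier V Ed s r"
proof -
  have "openin (tau_c V Ed s r) (gis_carrier V Ed s r)" by (simp add: openin_tau_c)
  hence "gis_carrier V Ed s r \<subseteq> topspace (tau_c V Ed s r)" by (rule openin_subset)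
  moreover have "topspace (tau_c V Ed s r) \<subseteq> gis_carrier V Ed s r"
    using openin_topspace[of "tau_c V Ed s r"] by (simp only: openin_tau_c)
  ultimately show ?thesis by blast
qed

lemma compact_tau_c: "compact_space (tau_c V Ed s r)"
proof (rule cof_compact[of GZero])
  show "GZero \<in> topspace (tau_c V Ed s r)" by (simp add: topspace_tau_c gis_carrier_def)
  show "cof (tau_c V Ed s r) GZero" unfolding cof_def topspace_tau_c openin_tau_c by blast
qed

theorem corollary2p2:
  fixes V :: "'v set" and Ed :: "'e set" and s r :: "'e \<Rightarrow> 'v"
    and T :: "('v, 'e) gis topology"
  assumes "graph V Ed s r"
    and "topspace T = gis_carrier V Ed s r"
    and "Hausdorff_space T"
    and "semitopological T (gis_mult r)"
  shows "(compact_space T \<longleftrightarrow> countably_compact_space T)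
       \<and> (countably_compact_space T \<longleftrightarrow> feebly_compact_space T)
       \<and> (feebly_compact_space T \<longleftrightarrow> clp_compact_space T)
       \<and> (clp_compact_space T \<longleftrightarrow> top_iso_semigroups T (gis_mult r) (tau_c V Ed s r) (gis_mult r))"
proof -
  have iso: "\<forall>x\<in>topspace T. x \<noteq> GZero \<longrightarrow> openin T {x}"
    using nonzero_isolated[OF assms] .
  have z: "GZero \<in> topspace T" using assms(2) by (simp add: gis_carrier_def)
  have t1: "t1_space T" using assms(3) Hausdorff_imp_t1_space by blast
  note lems = compact_cof[OF z t1 iso] cof_compact[OF z] cof_cc[OF z t1 iso] cc_cof[OF z t1 iso]
    cof_feebly[OF z t1 iso] feebly_cof[OF z t1 iso] cof_clp[OF z t1 iso] clp_cof[OF z t1 iso]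
  have c1: "compact_space T \<longleftrightarrow> cof T GZero" using lems by blast
  have c2: "countably_compact_space T \<longleftrightarrow> cof T GZero" using lems by blast
  have c3: "feebly_compact_space T \<longleftrightarrow> cof T GZero" using lems by blast
  have c4: "clp_compact_space T \<longleftrightarrow> cof T GZero" using lems by blast
  have c5: "top_iso_semigroups T (gis_mult r) (tau_c V Ed s r) (gis_mult r) \<longleftrightarrow> cof T GZero"
  proof
    assume "top_iso_semigroups T (gis_mult r) (tau_c V Ed s r) (gis_mult r)"
    then obtain h where "homeomorphic_map T (tau_c V Ed s r) h"
      unfolding top_iso_semigroups_def by blast
    hence "T homeomorphic_space tau_c V Ed s r" using homeomorphic_map_imp_homeomorphic_space by blast
    hence "compact_space T" using homeomorphic_compact_space compact_tau_c by blast
    thus "cof T GZero" using c1 by blast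
  next
    assume c: "cof T GZero"
    have "tau_c V Ed s r = T"
      unfolding topology_eq
    proof (intro allI iffI)
      fix S assume "openin (tau_c V Ed s r) S"
      hence S: "S \<subseteq> topspace T" "GZero \<in> S \<longrightarrow> finite (topspace T - S)"
        unfolding openin_tau_c assms(2) by auto
      show "openin T S"
      proof (cases "GZero \<in> S")
        case False thus ?thesis using open_nz[OF z t1 iso] S by blast
      next
        case True
        hence "closedin T (topspace T - S)" using S t1[unfolded t1_space_closedin_finite] by blast
        hence "openin T (topspace T - (topspace T - S))" by (simp add: closedin_def)
        moreover have "topspace T - (topspace T - S) = S" using S by blast
        ultimately show ?thesis by simp
      qed
    next
      fix S assume S: "openin T S"
      show "openin (tau_c V Ed s r) S" unfolding openin_tau_c
        using S c openin_subset assms(2) unfolding cof_def by metis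
    qed
    hence "homeomorphic_map T (tau_c V Ed s r) id" by simp
    thus "top_iso_semigroups T (gis_mult r) (tau_c V Ed s r) (gis_mult r)"
      unfolding top_iso_semigroups_def by (intro exI[of _ id]) simp
  qed
  show ?thesis using c1 c2 c3 c4 c5 by blast
qed


end
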